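(* Let $m\ge2$ be an integer and put $p(t)=t^{2^m}+1$ for $t\in\mathbb{R}$. Then there is a real polynomial $q$ of degree $2^{m-1}$ such that all $2^{m-1}+1$ coefficients of $q$ are positive and $p(t)=q(t)\,q(-t)$. *)

theory Defs
  imports "HOL-Computational_Algebra.Polynomial"
begin

end

theory Submission
  imports Defs
begin

fun Q :: "real list \<Rightarrow> real poly" where
  "Q [] = 1"
| "Q (a # as) = [:1, a, 1:] * Q as"

fun step :: "real list \<Rightarrow> real list" where
  "step [] = []"
| "step (a # as) = sqrt (2 - a) # sqrt (2 + a) # step as"

fun L :: "nat \<Rightarrow> real list" where
  "L 0 = [sqrt 2]"
| "L (Suc n) = step (L n)"

lemma step_len: "length (step as) = 2 * length as"
  by (induction as) auto

lemma step_set: "\<forall>a\<in>set as. 0 < a \<and> a < 2 \<Longrightarrow> \<forall>a\<in>set (step as). 0 < a \<and> a < 2"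
proof (induction as)
  case Nil then show ?case by simp
next
  case (Cons a as)
  have "sqrt (2 + a) < sqrt 4" using Cons.prems by (subst real_sqrt_less_iff) simp
  moreover have "sqrt (2 - a) < sqrt 4" using Cons.prems by (subst real_sqrt_less_iff) simp
  moreover have "sqrt 4 = (2::real)" by (rule real_sqrt_unique) auto
  ultimately show ?case using Cons by auto
qed

lemma L_props: "length (L n) = 2 ^ n \<and> (\<forall>a\<in>set (L n). 0 < a \<and> a < 2)"
proof (induction n)
  case 0
  have "sqrt 2 < sqrt (4::real)" by (subst real_sqrt_less_iff) simp
  moreover have "sqrt 4 = (2::real)" by (rule real_sqrt_unique) auto
  ultimately have "sqrt 2 < (2::real)" by linarith
  then show ?case by simp
next
  case (Suc n) then show ?case using step_len step_set[of "L n"] by simp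
qed

lemma key4g:
  fixes t a b c :: real
  assumes "b^2 = 2 - a" "c^2 = 2 + a"
  shows "(t^2 + b * t + 1) * (t^2 + c * t + 1)
       * ((t^2 - b * t + 1) * (t^2 - c * t + 1))
       = (t^4 + a * t^2 + 1) * (t^4 - a * t^2 + 1)"
  using assms by algebra

lemma key4:
  fixes t a :: real
  assumes "0 < a" "a < 2"
  shows "(t^2 + sqrt (2 - a) * t + 1) * (t^2 + sqrt (2 + a) * t + 1)
       * ((t^2 - sqrt (2 - a) * t + 1) * (t^2 - sqrt (2 + a) * t + 1))
       = (t^4 + a * t^2 + 1) * (t^4 - a * t^2 + 1)"
  by (rule key4g) (use assms in auto)

lemma step_eq:
  "\<forall>a\<in>set as. 0 < a \<and> a < 2 \<Longrightarrow>
   poly (Q (step as)) t * poly (Q (step as)) (-t) = poly (Q as) (t^2) * poly (Q as) (-(t^2))"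
proof (induction as)
  case Nil then show ?case by simp
next
  case (Cons a as)
  have IH: "poly (Q (step as)) t * poly (Q (step as)) (-t) = poly (Q as) (t^2) * poly (Q as) (-(t^2))"
    using Cons by simp
  have k: "(t^2 + sqrt (2 - a) * t + 1) * (t^2 + sqrt (2 + a) * t + 1)
       * ((t^2 - sqrt (2 - a) * t + 1) * (t^2 - sqrt (2 + a) * t + 1))
       = (t^4 + a * t^2 + 1) * (t^4 - a * t^2 + 1)" using Cons.prems by (intro key4) auto
  define X where "X = poly (Q (step as)) t"
  define Y where "Y = poly (Q (step as)) (-t)"
  define U where "U = poly (Q as) (t^2)"
  define V where "V = poly (Q as) (-(t^2))"
  have IH': "X * Y = U * V" using IH by (simp add: X_def Y_def U_def V_def)
  have "poly (Q (step (a # as))) t * poly (Q (step (a # as))) (-t)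
     = ((t^2 + sqrt (2 - a) * t + 1) * (t^2 + sqrt (2 + a) * t + 1)
       * ((t^2 - sqrt (2 - a) * t + 1) * (t^2 - sqrt (2 + a) * t + 1))) * (X * Y)"
  proof -
    have "poly (Q (step (a # as))) t = (t^2 + sqrt (2 - a) * t + 1) * ((t^2 + sqrt (2 + a) * t + 1) * X)"
      by (simp add: X_def algebra_simps power2_eq_square)
    moreover have "poly (Q (step (a # as))) (-t) = (t^2 - sqrt (2 - a) * t + 1) * ((t^2 - sqrt (2 + a) * t + 1) * Y)"
      by (simp add: Y_def algebra_simps power2_eq_square)
    ultimately show ?thesis by (simp only: mult_ac)
  qed
  also have "\<dots> = ((t^4 + a * t^2 + 1) * (t^4 - a * t^2 + 1)) * (U * V)" using k IH' by simp
  also have "\<dots> = poly (Q (a # as)) (t^2) * poly (Q (a # as)) (-(t^2))"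
    by (simp add: U_def V_def algebra_simps power2_eq_square power4_eq_xxxx)
  finally show ?case .
qed

lemma main_eq: "poly (Q (L n)) t * poly (Q (L n)) (-t) = t ^ (2 ^ (n + 2)) + 1"
proof (induction n arbitrary: t)
  case 0
  have "(sqrt 2)^2 = (2::real)" by simp
  then show ?case by (simp add: algebra_simps power2_eq_square power4_eq_xxxx)
next
  case (Suc n)
  have "poly (Q (L (Suc n))) t * poly (Q (L (Suc n))) (-t) = poly (Q (L n)) (t^2) * poly (Q (L n)) (-(t^2))"
    using step_eq L_props by simp
  also have "\<dots> = (t^2) ^ (2 ^ (n + 2)) + 1" using Suc by simp
  also have "\<dots> = t ^ (2 ^ (Suc n + 2)) + 1" by (simp add: power_mult[symmetric])
  finally show ?case .
qed

lemma Q_deg: "degree (Q as) = 2 * length as"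
proof (induction as)
  case Nil then show ?case by simp
next
  case (Cons a as)
  have "Q as \<noteq> 0" using Cons by (cases "as") auto
  hence "degree ([:1, a, 1:] * Q as) = degree [:1, a, 1:] + degree (Q as)"
    by (intro degree_mult_eq) auto
  then show ?case using Cons by simp
qed

lemma Q_pos: "\<forall>a\<in>set as. 0 < a \<Longrightarrow> \<forall>i \<le> degree (Q as). coeff (Q as) i > 0"
proof (induction as)
  case Nil then show ?case by simp
next
  case (Cons a as)
  define p where "p = Q as"
  have pos: "\<forall>i \<le> degree p. coeff p i > 0" using Cons by (simp add: p_def)
  have nn: "coeff p i \<ge> 0" for i
    using pos by (cases "i \<le> degree p") (auto simp: coeff_eq_0)
  have a: "a > 0" using Cons.prems by simp
  have e: "[:1, a, 1:] * p = p + smult a (pCons 0 p) + pCons 0 (pCons 0 p)"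
    by (simp add: algebra_simps)
  have dg: "degree (Q (a # as)) = degree p + 2" using Q_deg[of "a # as"] Q_deg[of as] by (simp add: p_def)
  show ?case
  proof (intro allI impI)
    fix i assume i: "i \<le> degree (Q (a # as))"
    have ci: "coeff (Q (a # as)) i = coeff p i + a * coeff (pCons 0 p) i + coeff (pCons 0 (pCons 0 p)) i"
    proof -
      have "Q (a # as) = [:1, a, 1:] * p" by (simp add: p_def)
      also have "\<dots> = p + smult a (pCons 0 p) + pCons 0 (pCons 0 p)" by (rule e)
      finally show ?thesis by (simp only: coeff_add coeff_smult)
    qed
    show "coeff (Q (a # as)) i > 0"
    proof (cases i)
      case 0 then show ?thesis using ci pos by simp
    next
      case (Suc j)
      show ?thesis
      proof (cases j)
        case 0
        have "a * coeff p 0 > 0" using pos a by simp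
        then show ?thesis using ci Suc 0 nn[of 1] by simp
      next
        case (Suc k)
        have "k \<le> degree p" using i dg \<open>i = Suc j\<close> Suc by simp
        hence "coeff p k > 0" using pos by simp
        moreover have "a * coeff p j \<ge> 0" using a nn by simp
        ultimately show ?thesis using ci \<open>i = Suc j\<close> Suc nn[of i] by simp
      qed
    qed
  qed
qed

theorem lemma9p1:
  fixes m :: nat
  assumes "m \<ge> 2"
  shows "\<exists>q :: real poly. degree q = 2 ^ (m - 1)
           \<and> (\<forall>i \<le> 2 ^ (m - 1). coeff q i > 0)
           \<and> (\<forall>t :: real. t ^ (2 ^ m) + 1 = poly q t * poly q (- t))"
proof -
  define n where "n = m - 2"
  have m: "m = n + 2" using assms n_def by simp
  have d: "degree (Q (L n)) = 2 ^ (m - 1)" using Q_deg L_props m by simp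
  show ?thesis
  proof (intro exI conjI allI impI)
    show "degree (Q (L n)) = 2 ^ (m - 1)" by (rule d)
    fix i :: nat assume "i \<le> 2 ^ (m - 1)"
    then show "coeff (Q (L n)) i > 0" using Q_pos[of "L n"] L_props d by auto
  next
    fix t :: real
    show "t ^ (2 ^ m) + 1 = poly (Q (L n)) t * poly (Q (L n)) (- t)" using main_eq m by simp
  qed
qed

end
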